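(* With the notation of the context, let $\lambda>0$ and define $\mathcal{G}_\lambda(x):=\{g(y): y\in\mathcal{C}_\lambda(x)\}$ and $\mathcal{G}(x):=\{g(y): y\in\mathcal{C}(x)\}$. For every $x$ such that $\hat y(x)\in\mathcal{C}(x)$, we have $\mathcal{G}_\lambda(x)\subseteq\mathcal{G}(x)$.
   Context: Classification with $C$ classes, labels in $[C]=\{1,\dots,C\}$. A classifier outputs a softmax vector $\hat\pi(x)\in\mathbb{R}^C$ and predicted class $\hat y(x)=\arg\max_i \hat\pi_i(x)$. A map $g:[C]\to[G]$ partitions the classes into $G$ groups. Define $d(y,y'):=\mathbb{I}\{g(y)\neq g(y')\}$. Given any real-valued score function $s(x,y)$ and $\lambda>0$, define the penalized score $s_\lambda(x,y):=s(x,y)+\lambda\, d(y,\hat y(x))$. Given a calibration set $\{(x_i,y_i)\}_{i=1}^n$ and $\alpha\in(0,1)$ with $\lceil (n+1)(1-\alpha)\rceil\le n$, $\hat q$ (resp. $\hat q_\lambda$) is the $\lceil (n+1)(1-\alpha)\rceil$-th smallest value of $\{s(x_i,y_i)\}_{i=1}^n$ (resp. $\{s_\lambda(x_i,y_i)\}_{i=1}^n$). Prediction sets: $\mathcal{C}(x)=\{y: s(x,y)\le\hat q\}$, $\mathcal{C}_\lambda(x)=\{y: s_\lambda(x,y)\le\hat q_\lambda\}$. *)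

theory Defs
  imports Complex_Main
begin

definition kth_smallest :: "nat \<Rightarrow> real list \<Rightarrow> real" where
  "kth_smallest k L = sort L ! (k - 1)"

definition grp_dist :: "(nat \<Rightarrow> nat) \<Rightarrow> nat \<Rightarrow> nat \<Rightarrow> real" where
  "grp_dist g y y' = (if g y \<noteq> g y' then 1 else 0)"

definition pen_score ::
  "('x \<Rightarrow> nat \<Rightarrow> real) \<Rightarrow> (nat \<Rightarrow> nat) \<Rightarrow> ('x \<Rightarrow> nat) \<Rightarrow> real \<Rightarrow> 'x \<Rightarrow> nat \<Rightarrow> real" where
  "pen_score s g yhat lam x y = s x y + lam * grp_dist g y (yhat x)"

definition conf_quantile ::
  "('x \<Rightarrow> nat \<Rightarrow> real) \<Rightarrow> nat \<Rightarrow> (nat \<Rightarrow> 'x) \<Rightarrow> (nat \<Rightarrow> nat) \<Rightarrow> real \<Rightarrow> real" where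
  "conf_quantile s n xs ys alpha =
     kth_smallest (nat \<lceil>real (n + 1) * (1 - alpha)\<rceil>) (map (\<lambda>i. s (xs i) (ys i)) [1..<n+1])"

definition pred_set :: "nat \<Rightarrow> ('x \<Rightarrow> nat \<Rightarrow> real) \<Rightarrow> real \<Rightarrow> 'x \<Rightarrow> nat set" where
  "pred_set C s q x = {y \<in> {1..C}. s x y \<le> q}"

end

theory Submission
  imports Defs
begin

lemma filter_sort_len: "length (filter P (sort L)) = length (filter P (L::real list))"
  by (simp add: filter_sort)

lemma sort_le_aux:
  fixes L :: "real list"
  assumes k: "k < length L" and cnt: "k + 1 \<le> length (filter (\<lambda>v. v \<le> t) L)"
  shows "sort L ! k \<le> t"
proof (rule ccontr)
  assume "\<not> sort L ! k \<le> t"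
  hence gt: "sort L ! k > t" by simp
  let ?S = "sort L"
  have "\<forall>j. k \<le> j \<and> j < length ?S \<longrightarrow> ?S ! j > t"
  proof (intro allI impI)
    fix j assume "k \<le> j \<and> j < length ?S"
    hence "?S ! k \<le> ?S ! j" using sorted_nth_mono[OF sorted_sort] by blast
    thus "?S ! j > t" using gt by linarith
  qed
  hence "{i. i < length ?S \<and> ?S ! i \<le> t} \<subseteq> {..<k}"
    by (auto simp: not_le[symmetric])
  hence "card {i. i < length ?S \<and> ?S ! i \<le> t} \<le> k"
    using card_mono[of "{..<k}"] by fastforce
  hence "length (filter (\<lambda>v. v \<le> t) ?S) \<le> k" by (simp add: length_filter_conv_card)
  moreover have "length (filter (\<lambda>v. v \<le> t) ?S) = length (filter (\<lambda>v. v \<le> t) L)"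
    by (rule filter_sort_len)
  ultimately show False using cnt by linarith
qed

lemma sort_mono_shift:
  fixes L M :: "real list"
  assumes len: "length L = length M" and k: "k < length M"
    and le: "\<And>i. i < length M \<Longrightarrow> L ! i \<le> M ! i + c"
  shows "sort L ! k \<le> sort M ! k + c"
proof -
  let ?t = "sort M ! k"
  have "{..k} \<subseteq> {i. i < length (sort M) \<and> sort M ! i \<le> ?t}"
    using k sorted_nth_mono[OF sorted_sort] by auto
  hence "k + 1 \<le> card {i. i < length (sort M) \<and> sort M ! i \<le> ?t}"
    using card_mono[of "{i. i < length (sort M) \<and> sort M ! i \<le> ?t}" "{..k}"] by simp
  hence c1: "k + 1 \<le> card {i. i < length M \<and> M ! i \<le> ?t}"
    using filter_sort_len[of "\<lambda>v. v \<le> ?t" M] by (simp add: length_filter_conv_card)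
  have "{i. i < length M \<and> M ! i \<le> ?t} \<subseteq> {i. i < length L \<and> L ! i \<le> ?t + c}"
  proof (intro subsetI, clarify)
    fix i assume "i < length M" "M ! i \<le> ?t"
    moreover have "L ! i \<le> M ! i + c" using le \<open>i < length M\<close> .
    ultimately show "i < length L \<and> L ! i \<le> ?t + c" using len by linarith
  qed
  hence "card {i. i < length M \<and> M ! i \<le> ?t} \<le> card {i. i < length L \<and> L ! i \<le> ?t + c}"
    by (intro card_mono) auto
  hence "k + 1 \<le> length (filter (\<lambda>v. v \<le> ?t + c) L)"
    using c1 by (simp add: length_filter_conv_card)
  thus ?thesis using sort_le_aux[of k L "?t + c"] k len by simp
qed

theorem corollary1:
  fixes C G n :: nat and pi :: "'x \<Rightarrow> nat \<Rightarrow> real" and yhat :: "'x \<Rightarrow> nat"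
    and g :: "nat \<Rightarrow> nat" and s :: "'x \<Rightarrow> nat \<Rightarrow> real"
    and xs :: "nat \<Rightarrow> 'x" and ys :: "nat \<Rightarrow> nat" and alpha lam :: real and x :: 'x
  assumes softmax: "\<And>x'. (\<forall>i\<in>{1..C}. pi x' i > 0) \<and> (\<Sum>i\<in>{1..C}. pi x' i) = 1"
    and argmax: "\<And>x'. yhat x' \<in> {1..C} \<and> (\<forall>i\<in>{1..C}. pi x' i \<le> pi x' (yhat x'))"
    and g_map: "\<forall>y\<in>{1..C}. g y \<in> {1..G}"
    and labels: "\<forall>i\<in>{1..n}. ys i \<in> {1..C}"
    and alpha: "0 < alpha" "alpha < 1"
    and rank_ok: "nat \<lceil>real (n + 1) * (1 - alpha)\<rceil> \<le> n"
    and lam: "lam > 0"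
    and yhat_in: "yhat x \<in> pred_set C s (conf_quantile s n xs ys alpha) x"
  shows "g ` pred_set C (pen_score s g yhat lam) (conf_quantile (pen_score s g yhat lam) n xs ys alpha) x
         \<subseteq> g ` pred_set C s (conf_quantile s n xs ys alpha) x"
proof
  fix z assume "z \<in> g ` pred_set C (pen_score s g yhat lam) (conf_quantile (pen_score s g yhat lam) n xs ys alpha) x"
  then obtain y where z: "z = g y" and y: "y \<in> {1..C}"
    and yle: "pen_score s g yhat lam x y \<le> conf_quantile (pen_score s g yhat lam) n xs ys alpha"
    unfolding pred_set_def by auto
  define k where "k = nat \<lceil>real (n + 1) * (1 - alpha)\<rceil>"
  have "real (n + 1) * (1 - alpha) > 0" using alpha by simp
  hence k1: "k \<ge> 1" unfolding k_def by linarith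
  have kn: "k \<le> n" using rank_ok k_def by simp
  define L where "L = map (\<lambda>i. pen_score s g yhat lam (xs i) (ys i)) [1..<n+1]"
  define M where "M = map (\<lambda>i. s (xs i) (ys i)) [1..<n+1]"
  have "sort L ! (k - 1) \<le> sort M ! (k - 1) + lam"
  proof (rule sort_mono_shift)
    show "length L = length M" unfolding L_def M_def by simp
    show "k - 1 < length M" unfolding M_def using k1 kn by simp
    fix i assume "i < length M"
    hence "L ! i = pen_score s g yhat lam (xs (i+1)) (ys (i+1))" "M ! i = s (xs (i+1)) (ys (i+1))"
      unfolding L_def M_def by (simp_all del: upt_Suc)
    thus "L ! i \<le> M ! i + lam" unfolding pen_score_def grp_dist_def
      using lam by simp
  qed
  hence qq: "conf_quantile (pen_score s g yhat lam) n xs ys alpha \<le> conf_quantile s n xs ys alpha + lam"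
    unfolding conf_quantile_def kth_smallest_def L_def M_def k_def by simp
  show "z \<in> g ` pred_set C s (conf_quantile s n xs ys alpha) x"
  proof (cases "g y = g (yhat x)")
    case True
    thus ?thesis using z yhat_in by auto
  next
    case False
    hence "s x y + lam \<le> conf_quantile (pen_score s g yhat lam) n xs ys alpha"
      using yle unfolding pen_score_def grp_dist_def by simp
    hence "s x y \<le> conf_quantile s n xs ys alpha" using qq by simp
    thus ?thesis using z y unfolding pred_set_def by auto
  qed
qed

end
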